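(* Let $d$ be a distance function on the edges of the complete graph $K_n$ and let $H$ be a Hamiltonian cycle of $K_n$. Then, with probability $\Omega(1)$ (as $n\to\infty$), one application of the edge-based random solution generation with the matrix $\Pi^H$ outputs a Hamiltonian cycle whose cost is not larger than the cost of $H$.
   Context: The cost of a Hamiltonian cycle is the sum of $d$ over its edges. For a Hamiltonian cycle $H$, $\Pi^H=(\pi_{i,j})$ is the symmetric $n\times n$ matrix with $\pi_{i,i}=0$, $\pi_{i,j}=1-\frac1n$ if $\{i,j\}\in H$ and $\pi_{i,j}=\frac{1}{n(n-2)}$ otherwise. Edge-based generation from $\Pi$: start with $B=\emptyset$ and repeatedly add to $B$ an edge $\{i,j\}\notin B$ chosen among the admissible edges with probability proportional to $\pi_{i,j}+\pi_{j,i}$, until $B$ is a Hamiltonian cycle; an edge is admissible if adding it to $B$ creates no vertex of degree $\ge3$ and no cycle with fewer than $n$ edges. *)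

theory Defs
  imports "HOL-Probability.Probability"
begin

definition Kn_edges :: "nat \<Rightarrow> nat set set" where
  "Kn_edges n = {e. e \<subseteq> {0..<n} \<and> card e = 2}"

definition cycle_edges :: "(nat \<Rightarrow> nat) \<Rightarrow> nat \<Rightarrow> nat set set" where
  "cycle_edges f k = {{f i, f ((i + 1) mod k)} | i. i < k}"

definition ham_cycle :: "nat \<Rightarrow> nat set set \<Rightarrow> bool" where
  "ham_cycle n H \<longleftrightarrow> n \<ge> 3 \<and>
     (\<exists>f. bij_betw f {0..<n} {0..<n} \<and> H = cycle_edges f n)"

definition has_cycle_len :: "nat \<Rightarrow> nat \<Rightarrow> nat set set \<Rightarrow> bool" where
  "has_cycle_len n k B \<longleftrightarrow> k \<ge> 3 \<and>
     (\<exists>f. inj_on f {0..<k} \<and> f ` {0..<k} \<subseteq> {0..<n} \<and> cycle_edges f k \<subseteq> B)"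

definition degree :: "nat set set \<Rightarrow> nat \<Rightarrow> nat" where
  "degree B v = card {e \<in> B. v \<in> e}"

definition admissible :: "nat \<Rightarrow> nat set set \<Rightarrow> nat set set" where
  "admissible n B = {e \<in> Kn_edges n. e \<notin> B \<and>
      (\<forall>v. degree (insert e B) v < 3) \<and>
      (\<forall>k<n. \<not> has_cycle_len n k (insert e B))}"

definition cost :: "(nat set \<Rightarrow> real) \<Rightarrow> nat set set \<Rightarrow> real" where
  "cost d H = (\<Sum>e\<in>H. d e)"

definition PiH :: "nat \<Rightarrow> nat set set \<Rightarrow> nat \<Rightarrow> nat \<Rightarrow> real" where
  "PiH n H i j = (if i = j then 0
                  else if {i, j} \<in> H then 1 - 1 / real n
                  else 1 / (real n * (real n - 2)))"

text \<open>Weight of edge {i,j}: pi i j + pi j i.\<close>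
definition edge_weight :: "(nat \<Rightarrow> nat \<Rightarrow> real) \<Rightarrow> nat set \<Rightarrow> real" where
  "edge_weight P e = (\<Sum>i\<in>e. \<Sum>j\<in>e - {i}. P i j)"

definition weighted_choice :: "'a set \<Rightarrow> ('a \<Rightarrow> real) \<Rightarrow> 'a pmf" where
  "weighted_choice A w = embed_pmf (\<lambda>x. if x \<in> A then w x / (\<Sum>y\<in>A. w y) else 0)"

fun gen_steps :: "nat \<Rightarrow> (nat \<Rightarrow> nat \<Rightarrow> real) \<Rightarrow> nat \<Rightarrow> nat set set \<Rightarrow> nat set set pmf" where
  "gen_steps n P 0 B = return_pmf B"
| "gen_steps n P (Suc k) B =
     (if ham_cycle n B \<or> admissible n B = {} then return_pmf B
      else bind_pmf (weighted_choice (admissible n B) (edge_weight P))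
                    (\<lambda>e. gen_steps n P k (insert e B)))"

text \<open>One run of the generation, starting from the empty set; n steps suffice since
  every step adds one edge and a Hamiltonian cycle has n edges.\<close>
definition edge_gen :: "nat \<Rightarrow> (nat \<Rightarrow> nat \<Rightarrow> real) \<Rightarrow> nat set set pmf" where
  "edge_gen n P = gen_steps n P n {}"

end

theory Submission imports Defs begin

locale hc =
  fixes n :: nat and g :: "nat \<Rightarrow> nat"
  assumes n3: "n \<ge> 3" and bij: "bij_betw g {0..<n} {0..<n}"
begin

definition sc :: "nat \<Rightarrow> nat" where "sc j = (if j + 1 < n then j + 1 else 0)"
definition pr :: "nat \<Rightarrow> nat" where "pr j = (if j = 0 then n - 1 else j - 1)"
definition Ep :: "nat \<Rightarrow> nat set" where "Ep j = {g j, g (sc j)}"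

lemma inj: "inj_on g {0..<n}" using bij bij_betw_def by blast
lemma img: "g ` {0..<n} = {0..<n}" using bij by (simp add: bij_betw_def)
lemma gin: "j < n \<Longrightarrow> g j < n"
proof -
  assume "j < n" hence "g j \<in> g ` {0..<n}" by simp
  thus ?thesis unfolding img by simp
qed
lemma gsurj: "v < n \<Longrightarrow> \<exists>j<n. v = g j"
proof -
  assume "v < n" hence "v \<in> g ` {0..<n}" unfolding img by simp
  thus ?thesis by auto
qed
lemma geq: "i < n \<Longrightarrow> j < n \<Longrightarrow> g i = g j \<longleftrightarrow> i = j"
  using inj by (auto dest: inj_onD)
lemma sc_mod: "j < n \<Longrightarrow> (j + 1) mod n = sc j"
proof (cases "j + 1 < n")
  case False
  assume "j < n" hence "j + 1 = n" using False by simp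
  thus ?thesis unfolding sc_def by simp
qed (simp add: sc_def)
lemma sc_mod': "j < n \<Longrightarrow> Suc j mod n = sc j" using sc_mod by simp
lemma sc_lt: "j < n \<Longrightarrow> sc j < n" unfolding sc_def using n3 by auto
lemma pr_lt: "j < n \<Longrightarrow> pr j < n" unfolding pr_def using n3 by auto
lemma sc_pr: "j < n \<Longrightarrow> sc (pr j) = j" unfolding sc_def pr_def using n3 by auto
lemma sc_ne: "j < n \<Longrightarrow> sc j \<noteq> j" unfolding sc_def using n3 by auto
lemma sc_pr_ne: "j < n \<Longrightarrow> sc j \<noteq> pr j" unfolding sc_def pr_def using n3 by auto
lemma sc_inj: "i < n \<Longrightarrow> j < n \<Longrightarrow> sc i = sc j \<Longrightarrow> i = j" unfolding sc_def using n3
  by (auto split: if_splits)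
lemma scsc: "j < n \<Longrightarrow> sc (sc j) \<noteq> j" unfolding sc_def using n3 by auto

lemma H_eq: "cycle_edges g n = Ep ` {0..<n}"
proof -
  have "cycle_edges g n = (\<lambda>i. {g i, g ((i + 1) mod n)}) ` {0..<n}"
    unfolding cycle_edges_def by auto
  also have "\<dots> = Ep ` {0..<n}" unfolding Ep_def by (intro image_cong) (auto simp: sc_mod')
  finally show ?thesis .
qed

lemma Ep_card: "j < n \<Longrightarrow> card (Ep j) = 2"
proof -
  assume j: "j < n"
  have "g j \<noteq> g (sc j)" using geq[of j "sc j"] sc_lt[OF j] sc_ne[OF j] j by auto
  thus ?thesis unfolding Ep_def by simp
qed

lemma Ep_sub: "j < n \<Longrightarrow> Ep j \<subseteq> {0..<n}"
  unfolding Ep_def using gin sc_lt by auto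

lemma Ep_inj: "inj_on Ep {0..<n}"
proof (rule inj_onI)
  fix i j assume i: "i \<in> {0..<n}" and j: "j \<in> {0..<n}" and e: "Ep i = Ep j"
  have "g i \<in> Ep j" using e unfolding Ep_def by auto
  hence 1: "i = j \<or> i = sc j" using i j sc_lt geq unfolding Ep_def by auto
  have "g (sc i) \<in> Ep j" using e unfolding Ep_def by auto
  hence 2: "sc i = j \<or> sc i = sc j" using i j sc_lt geq unfolding Ep_def by auto
  show "i = j" using 1 2 scsc[of j] sc_inj[of i j] i j by auto
qed

lemma card_H: "card (cycle_edges g n) = n"
  unfolding H_eq using card_image[OF Ep_inj] by simp

lemma H_Kn: "cycle_edges g n \<subseteq> Kn_edges n"
  unfolding H_eq Kn_edges_def using Ep_card Ep_sub by (intro image_subsetI) auto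

lemma finite_H: "finite (cycle_edges g n)"
  unfolding H_eq by simp

lemma edge_at:
  assumes "e \<in> cycle_edges g n" "j < n" "g j \<in> e"
  shows "e = Ep j \<or> e = Ep (pr j)"
proof -
  obtain i where i: "i < n" "e = Ep i" using assms(1) unfolding H_eq by auto
  have "g j = g i \<or> g j = g (sc i)" using assms(3) i unfolding Ep_def by auto
  hence "j = i \<or> j = sc i" using geq i assms(2) sc_lt by auto
  moreover have "j = sc i \<Longrightarrow> i = pr j" unfolding sc_def pr_def using i n3 by auto
  ultimately show ?thesis using i by auto
qed

lemma Ep_pr: "j < n \<Longrightarrow> Ep (pr j) = {g (pr j), g j}"
  unfolding Ep_def using sc_pr by simp

lemma Ep_ne: "j < n \<Longrightarrow> Ep j \<noteq> Ep (pr j)"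
  using Ep_inj pr_lt sc_pr sc_ne unfolding inj_on_def
  by (metis atLeastLessThan_iff le0)

lemma Ep_in: "j < n \<Longrightarrow> Ep j \<in> cycle_edges g n" unfolding H_eq by auto
lemma Ep_pr_in: "j < n \<Longrightarrow> Ep (pr j) \<in> cycle_edges g n" using Ep_in pr_lt by auto
lemma g_Ep: "g j \<in> Ep j" "g j \<in> Ep (pr j)" if "j < n"
  using Ep_pr that unfolding Ep_def by auto

lemma deg_H: "degree (cycle_edges g n) v \<le> 2"
proof (cases "v < n")
  case True
  then obtain j where j: "j < n" "v = g j" using gsurj by blast
  have "{e \<in> cycle_edges g n. v \<in> e} \<subseteq> {Ep j, Ep (pr j)}" using edge_at j by auto
  hence "degree (cycle_edges g n) v \<le> card {Ep j, Ep (pr j)}"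
    unfolding degree_def by (intro card_mono) auto
  also have "\<dots> \<le> 2" by (simp add: card_insert_le_m1)
  finally show ?thesis .
next
  case False
  have E: "{e \<in> cycle_edges g n. v \<in> e} = {}" using False Ep_sub unfolding H_eq by fastforce
  show ?thesis unfolding degree_def E by simp
qed

lemma no_short:
  assumes CH: "C \<subseteq> cycle_edges g n" and kn: "k < n" and hc: "has_cycle_len n k C"
  shows False
proof -
  obtain f where k3: "k \<ge> 3" and finj: "inj_on f {0..<k}" and fim: "f ` {0..<k} \<subseteq> {0..<n}"
    and fC: "cycle_edges f k \<subseteq> C" using hc unfolding has_cycle_len_def by blast
  define S where "S = f ` {0..<k}"
  have feq: "a < k \<Longrightarrow> b < k \<Longrightarrow> f a = f b \<longleftrightarrow> a = b" for a b
    using finj by (auto dest: inj_onD)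
  have clos: "g (sc j) \<in> S" if j: "j < n" and gj: "g j \<in> S" for j
  proof -
    obtain i where i: "i < k" "g j = f i" using gj unfolding S_def by auto
    define i1 where "i1 = (i + 1) mod k"
    define i0 where "i0 = (if i = 0 then k - 1 else i - 1)"
    have i1k: "i1 < k" unfolding i1_def using i by simp
    have i0k: "i0 < k" unfolding i0_def using i by auto
    have i0s: "(i0 + 1) mod k = i" unfolding i0_def using i k3 by auto
    have i1i: "i1 \<noteq> i"
    proof (cases "i + 1 < k")
      case True thus ?thesis unfolding i1_def by simp
    next
      case False hence "i + 1 = k" using i by simp
      thus ?thesis unfolding i1_def using k3 by auto
    qed
    have i10: "i1 \<noteq> i0"
    proof (cases "i + 1 < k")
      case True thus ?thesis unfolding i1_def i0_def using k3 by auto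
    next
      case False hence "i + 1 = k" using i by simp
      thus ?thesis unfolding i1_def i0_def using k3 by auto
    qed
    define e1 where "e1 = {f i, f i1}"
    define e2 where "e2 = {f i0, f i}"
    have e1c: "e1 \<in> cycle_edges f k" unfolding e1_def cycle_edges_def i1_def using i by blast
    have e2c: "e2 \<in> cycle_edges f k" unfolding e2_def cycle_edges_def using i0k i0s
      by (metis (mono_tags, lifting) mem_Collect_eq)
    have e1H: "e1 \<in> cycle_edges g n" using e1c fC CH by blast
    have e2H: "e2 \<in> cycle_edges g n" using e2c fC CH by blast
    have "e1 = Ep j \<or> e1 = Ep (pr j)" using edge_at[OF e1H j] i unfolding e1_def by simp
    moreover have "e2 = Ep j \<or> e2 = Ep (pr j)" using edge_at[OF e2H j] i unfolding e2_def by simp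
    moreover have "e1 \<noteq> e2"
    proof
      assume "e1 = e2"
      hence "f i1 \<in> {f i0, f i}" unfolding e1_def e2_def by auto
      thus False using feq[OF i1k i0k] feq[OF i1k i(1)] i1i i10 by auto
    qed
    ultimately have "Ep j = e1 \<or> Ep j = e2" by auto
    moreover have "e1 \<subseteq> S" "e2 \<subseteq> S" unfolding S_def e1_def e2_def using i i1k i0k by auto
    moreover have "g (sc j) \<in> Ep j" unfolding Ep_def by simp
    ultimately show ?thesis by auto
  qed
  have "f 0 \<in> f ` {0..<k}" using k3 by auto
  hence "f 0 < n" using fim by auto
  then obtain j0 where j0: "j0 < n" "g j0 = f 0" using gsurj by metis
  have all: "g ((j0 + t) mod n) \<in> S" for t
  proof (induction t)
    case 0 thus ?case using j0 k3 unfolding S_def by auto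
  next
    case (Suc t)
    have "(j0 + Suc t) mod n = sc ((j0 + t) mod n)"
      using sc_mod'[of "(j0 + t) mod n"] n3 by (simp add: mod_Suc_eq)
    thus ?case using clos[OF _ Suc] n3 by simp
  qed
  have "{0..<n} \<subseteq> S"
  proof
    fix v assume "v \<in> {0..<n}"
    then obtain j where j: "j < n" "v = g j" using gsurj by auto
    have "(j0 + (j + n - j0)) mod n = j" using j0 j by simp
    thus "v \<in> S" using all[of "j + n - j0"] j by simp
  qed
  hence "n \<le> card S" using card_mono[of S "{0..<n}"] unfolding S_def by simp
  moreover have "card S \<le> k" unfolding S_def using card_image_le[of "{0..<k}" f] by simp
  ultimately show False using kn by simp
qed

lemma deg_insert:
  assumes "finite B" "e \<notin> B"
  shows "degree (insert e B) v = degree B v + (if v \<in> e then 1 else 0)"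
proof -
  have "{x \<in> insert e B. v \<in> x} = (if v \<in> e then insert e {x \<in> B. v \<in> x} else {x \<in> B. v \<in> x})"
    by auto
  thus ?thesis unfolding degree_def using assms by auto
qed

lemma deg_mono: "finite C \<Longrightarrow> B \<subseteq> C \<Longrightarrow> degree B v \<le> degree C v"
  unfolding degree_def by (intro card_mono) auto

lemma adm_H:
  assumes B: "B \<subseteq> cycle_edges g n"
  shows "cycle_edges g n - B \<subseteq> admissible n B"
proof
  fix e assume e: "e \<in> cycle_edges g n - B"
  have sub: "insert e B \<subseteq> cycle_edges g n" using e B by auto
  have "\<forall>v. degree (insert e B) v < 3"
  proof
    fix v
    have "degree (insert e B) v \<le> degree (cycle_edges g n) v"
      using deg_mono[OF finite_H sub] .
    thus "degree (insert e B) v < 3" using deg_H[of v] by simp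
  qed
  moreover have "\<forall>k<n. \<not> has_cycle_len n k (insert e B)" using no_short[OF sub] by blast
  ultimately show "e \<in> admissible n B" unfolding admissible_def using e H_Kn by auto
qed

lemma low_deg:
  assumes B: "B \<subseteq> cycle_edges g n" and v: "v < n" and d: "degree B v \<le> 1"
  shows "v \<in> \<Union>(cycle_edges g n - B)"
proof (rule ccontr)
  assume nv: "v \<notin> \<Union>(cycle_edges g n - B)"
  obtain j where j: "j < n" "v = g j" using gsurj v by blast
  have "Ep j \<in> B" using nv Ep_in[OF j(1)] g_Ep[OF j(1)] j by auto
  moreover have "Ep (pr j) \<in> B" using nv Ep_pr_in[OF j(1)] g_Ep[OF j(1)] j by auto
  ultimately have "{Ep j, Ep (pr j)} \<subseteq> {e \<in> B. v \<in> e}" using g_Ep[OF j(1)] j by auto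
  hence "card {Ep j, Ep (pr j)} \<le> degree B v" unfolding degree_def
    using finite_subset[OF B finite_H] by (intro card_mono) auto
  thus False using Ep_ne[OF j(1)] d by simp
qed

lemma adm_nonH:
  assumes B: "B \<subseteq> cycle_edges g n"
  shows "admissible n B - cycle_edges g n \<subseteq> {e. e \<subseteq> \<Union>(cycle_edges g n - B) \<and> card e = 2}"
proof
  fix e assume e: "e \<in> admissible n B - cycle_edges g n"
  have fB: "finite B" using finite_subset[OF B finite_H] .
  have eK: "e \<in> Kn_edges n" and eB: "e \<notin> B" and dg: "\<forall>v. degree (insert e B) v < 3"
    using e unfolding admissible_def by auto
  have "v \<in> \<Union>(cycle_edges g n - B)" if v: "v \<in> e" for v
  proof -
    have "degree (insert e B) v < 3" using dg by blast
    hence "degree B v \<le> 1" using deg_insert[OF fB eB, of v] v by simp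
    moreover have "v < n" using eK v unfolding Kn_edges_def by auto
    ultimately show ?thesis using low_deg[OF B] by blast
  qed
  thus "e \<in> {e. e \<subseteq> \<Union>(cycle_edges g n - B) \<and> card e = 2}" using eK unfolding Kn_edges_def by auto
qed

lemma card_U:
  assumes B: "B \<subseteq> cycle_edges g n"
  shows "card (\<Union>(cycle_edges g n - B)) \<le> 2 * card (cycle_edges g n - B)"
proof -
  have "card (\<Union>(cycle_edges g n - B)) \<le> sum card (cycle_edges g n - B)"
    by (rule card_Union_le_sum_card)
  also have "\<dots> = sum (\<lambda>_. 2) (cycle_edges g n - B)"
    using H_Kn unfolding Kn_edges_def by (intro sum.cong) auto
  finally show ?thesis by simp
qed

lemma card_nonH:
  assumes B: "B \<subseteq> cycle_edges g n"
  shows "card (admissible n B - cycle_edges g n) \<le> 4 * (card (cycle_edges g n - B))^2"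
proof -
  define D where "D = \<Union>(cycle_edges g n - B)"
  have "D \<subseteq> {0..<n}"
  proof
    fix v assume "v \<in> D"
    then obtain j where "j < n" "v \<in> Ep j" unfolding D_def H_eq by auto
    thus "v \<in> {0..<n}" using Ep_sub by blast
  qed
  hence fD: "finite D" using finite_subset by blast
  have fin: "finite {e. e \<subseteq> D \<and> card e = 2}"
    by (rule finite_subset[of _ "Pow D"]) (use fD in auto)
  have sub: "admissible n B - cycle_edges g n \<subseteq> {e. e \<subseteq> D \<and> card e = 2}"
    using adm_nonH[OF B] unfolding D_def .
  have "card (admissible n B - cycle_edges g n) \<le> card {e. e \<subseteq> D \<and> card e = 2}"
    using card_mono[OF fin sub] .
  also have "\<dots> = card D choose 2" using n_subsets[OF fD] by simp
  also have "\<dots> \<le> (card D)^2"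
  proof (cases "2 \<le> card D")
    case True thus ?thesis by (rule binomial_le_pow)
  next
    case False thus ?thesis by (simp add: binomial_eq_0)
  qed
  also have "\<dots> \<le> (2 * card (cycle_edges g n - B))^2"
    using card_U[OF B] unfolding D_def by (intro power_mono) auto
  finally show ?thesis by (simp add: power_mult_distrib)
qed


lemma w_pair: "a \<noteq> b \<Longrightarrow> edge_weight P {a, b} = P a b + P b a"
  unfolding edge_weight_def by (simp add: insert_Diff_if)

lemma w_H: "e \<in> cycle_edges g n \<Longrightarrow> edge_weight (PiH n (cycle_edges g n)) e = 2 * (1 - 1 / real n)"
proof -
  assume e: "e \<in> cycle_edges g n"
  then obtain a b where ab: "e = {a, b}" "a \<noteq> b" using H_Kn unfolding Kn_edges_def card_2_iff by blast
  have 1: "{a, b} \<in> cycle_edges g n" "{b, a} \<in> cycle_edges g n" using e ab by (auto simp: insert_commute)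
  have "PiH n (cycle_edges g n) a b = 1 - 1 / real n" "PiH n (cycle_edges g n) b a = 1 - 1 / real n"
    unfolding PiH_def using 1 ab by auto
  thus ?thesis using ab w_pair[of a b] by simp
qed

lemma w_nonH: "e \<in> Kn_edges n \<Longrightarrow> e \<notin> cycle_edges g n \<Longrightarrow>
    edge_weight (PiH n (cycle_edges g n)) e = 2 / (real n * (real n - 2))"
proof -
  assume e: "e \<in> Kn_edges n" "e \<notin> cycle_edges g n"
  then obtain a b where ab: "e = {a, b}" "a \<noteq> b" unfolding Kn_edges_def card_2_iff by blast
  have 1: "{a, b} \<notin> cycle_edges g n" "{b, a} \<notin> cycle_edges g n" using e ab by (auto simp: insert_commute)
  have "PiH n (cycle_edges g n) a b = 1 / (real n * (real n - 2))" "PiH n (cycle_edges g n) b a = 1 / (real n * (real n - 2))"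
    unfolding PiH_def using 1 ab by auto
  thus ?thesis using ab w_pair[of a b] by simp
qed

end

lemma wc_pmf:
  assumes fA: "finite A" and ne: "A \<noteq> {}" and pos: "\<And>x. x \<in> A \<Longrightarrow> w x > (0::real)"
  shows "pmf (weighted_choice A w) x = (if x \<in> A then w x / sum w A else 0)"
proof -
  have S: "sum w A > 0" using sum_pos[OF fA ne pos] .
  define f where "f = (\<lambda>x. if x \<in> A then w x / sum w A else 0)"
  have nn: "\<And>x. 0 \<le> f x" unfolding f_def using pos S by (auto intro: less_imp_le)
  have "(\<integral>\<^sup>+x. ennreal (f x) \<partial>count_space UNIV) = (\<Sum>x\<in>A. ennreal (f x))"
    by (rule nn_integral_count_space') (auto simp: fA f_def)
  also have "\<dots> = ennreal (\<Sum>x\<in>A. f x)" using nn by (simp add: sum_ennreal)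
  also have "(\<Sum>x\<in>A. f x) = (\<Sum>x\<in>A. w x / sum w A)" unfolding f_def by simp
  also have "\<dots> = 1" using S by (simp add: sum_divide_distrib[symmetric])
  finally have I: "(\<integral>\<^sup>+x. ennreal (f x) \<partial>count_space UNIV) = 1" by simp
  show ?thesis unfolding weighted_choice_def f_def[symmetric]
    using pmf_embed_pmf[of f, OF nn I] unfolding f_def by simp
qed

lemma step_ineq:
  fixes n M c Q :: real
  assumes n3: "n \<ge> 3" and M: "M \<ge> 1" and c0: "c \<ge> 0" and c: "c \<le> 4 * M^2" and Q: "Q \<ge> 0"
  shows "Q * exp (- (4 * M / ((n - 1) * (n - 2)))) \<le>
         (M * (2 * (1 - 1 / n))) / (M * (2 * (1 - 1 / n)) + c * (2 / (n * (n - 2)))) * Q"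
proof -
  define K where "K = (n - 1) * (n - 2)"
  define x where "x = 4 * M / K"
  define a where "a = 2 * (1 - 1 / n)"
  define b where "b = 2 / (n * (n - 2))"
  have K: "K > 0" unfolding K_def using n3 by simp
  have x0: "x \<ge> 0" unfolding x_def using K M by simp
  have "1 / n < 1" using n3 by (simp add: divide_less_eq)
  hence a: "a > 0" unfolding a_def by simp
  have b: "b > 0" unfolding b_def using n3 by simp
  have "exp (- x) = inverse (exp x)" by (simp add: exp_minus)
  also have "\<dots> \<le> inverse (1 + x)" using exp_ge_add_one_self[of x] x0
    by (intro le_imp_inverse_le) auto
  finally have e1: "exp (- x) \<le> 1 / (1 + x)" by (simp add: inverse_eq_divide)
  have nz: "n \<noteq> 0" "n - 1 \<noteq> 0" "n - 2 \<noteq> 0" using n3 by auto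
  have a2: "a = 2 * (n - 1) / n" unfolding a_def using nz by (simp add: field_simps)
  have "M * a * x = (M * 2 * (n - 1) * 4 * M) / (n * ((n - 1) * (n - 2)))"
    unfolding a2 x_def K_def by (simp add: divide_simps)
  also have "\<dots> = ((n - 1) * (8 * M * M)) / ((n - 1) * (n * (n - 2)))"
    by (simp add: algebra_simps)
  also have "\<dots> = (8 * M * M) / (n * (n - 2))" using nz(2) by (rule mult_divide_mult_cancel_left)
  also have "\<dots> = 4 * M^2 * b" unfolding b_def by (simp add: power2_eq_square)
  finally have Max: "M * a * x = 4 * M^2 * b" .
  have cb: "c * b \<le> M * a * x" using Max c b by (simp add: mult_right_mono)
  have pos: "M * a + c * b > 0" using M a b c0 by (simp add: add_pos_nonneg)
  have "1 / (1 + x) \<le> (M * a) / (M * a + c * b)"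
    using cb pos x0 M a by (simp add: divide_simps) (simp add: algebra_simps)
  hence "exp (- x) \<le> (M * a) / (M * a + c * b)" using e1 by linarith
  hence "Q * exp (- x) \<le> Q * ((M * a) / (M * a + c * b))" using Q by (rule mult_left_mono)
  thus ?thesis unfolding x_def K_def a_def b_def by (simp add: mult.commute)
qed


context hc
begin

lemma main:
  assumes "B \<subseteq> cycle_edges g n" "card B + m = n"
  shows "exp (- (2 * real m * (real m + 1) / ((real n - 1) * (real n - 2))))
           \<le> pmf (gen_steps n (PiH n (cycle_edges g n)) m B) (cycle_edges g n)"
  using assms
proof (induction m arbitrary: B)
  case 0
  have "B = cycle_edges g n" using card_subset_eq[OF finite_H 0(1)] 0(2) card_H by simp
  thus ?case by simp
next
  case (Suc m)
  note B = Suc.prems(1)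
  define HH where "HH = cycle_edges g n"
  define P where "P = PiH n HH"
  define K where "K = (real n - 1) * (real n - 2)"
  define Q where "Q = exp (- (2 * real m * (real m + 1) / K))"
  define a where "a = 2 * (1 - 1 / real n)"
  define b where "b = 2 / (real n * (real n - 2))"
  define A where "A = admissible n B"
  define w where "w = edge_weight P"
  have fB: "finite B" using finite_subset[OF B finite_H] .
  have cHB: "card (HH - B) = Suc m"
    using card_Diff_subset[OF fB B] card_H Suc.prems(2) unfolding HH_def by simp
  have nh: "\<not> ham_cycle n B"
  proof
    assume "ham_cycle n B"
    then obtain f where f: "n \<ge> 3" "bij_betw f {0..<n} {0..<n}" "B = cycle_edges f n"
      unfolding ham_cycle_def by blast
    interpret F: hc n f using f by unfold_locales
    have "card B = n" using F.card_H f(3) by simp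
    thus False using Suc.prems(2) by simp
  qed
  have HA: "HH - B \<subseteq> A" unfolding A_def HH_def using adm_H[OF B] .
  have HBne: "HH - B \<noteq> {}"
  proof
    assume e: "HH - B = {}" show False using cHB unfolding e by simp
  qed
  hence Ane: "A \<noteq> {}" using HA by auto
  have AK: "A \<subseteq> Kn_edges n" unfolding A_def admissible_def by auto
  have AB: "\<And>e. e \<in> A \<Longrightarrow> e \<notin> B" unfolding A_def admissible_def by auto
  have "Kn_edges n \<subseteq> Pow {0..<n}" unfolding Kn_edges_def by auto
  hence fA: "finite A" using AK finite_subset by (metis finite_Pow_iff finite_atLeastLessThan)
  have n1: "1 / real n < 1" using n3 by (simp add: divide_less_eq)
  have a0: "a > 0" unfolding a_def using n1 by simp
  have b0: "b > 0" unfolding b_def using n3 by simp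
  have wH: "\<And>e. e \<in> HH \<Longrightarrow> w e = a" unfolding w_def P_def HH_def a_def using w_H by simp
  have wN: "\<And>e. e \<in> A - HH \<Longrightarrow> w e = b" unfolding w_def P_def HH_def b_def using w_nonH AK by auto
  have wpos: "\<And>e. e \<in> A \<Longrightarrow> w e > 0" using wH wN a0 b0 by (metis DiffI)
  define W where "W = sum w A"
  have pw: "\<And>e. pmf (weighted_choice A w) e = (if e \<in> A then w e / W else 0)"
    unfolding W_def using wc_pmf[OF fA Ane wpos] by simp
  have gs: "gen_steps n P (Suc m) B = bind_pmf (weighted_choice A w) (\<lambda>e. gen_steps n P m (insert e B))"
    using nh Ane unfolding A_def w_def by simp
  have IH: "Q \<le> pmf (gen_steps n P m (insert e B)) HH" if e: "e \<in> HH - B" for e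
  proof -
    have "insert e B \<subseteq> cycle_edges g n" using e B unfolding HH_def by auto
    moreover have "card (insert e B) + m = n" using e fB Suc.prems(2) by simp
    ultimately show ?thesis using Suc.IH unfolding Q_def K_def P_def HH_def by blast
  qed
  have "pmf (gen_steps n P (Suc m) B) HH = (\<integral>e. pmf (gen_steps n P m (insert e B)) HH \<partial>measure_pmf (weighted_choice A w))"
    unfolding gs pmf_bind ..
  also have "\<dots> = (\<Sum>e\<in>A. pmf (weighted_choice A w) e *\<^sub>R pmf (gen_steps n P m (insert e B)) HH)"
    by (rule integral_measure_pmf[OF fA]) (auto simp: set_pmf_eq pw split: if_splits)
  also have "\<dots> \<ge> (\<Sum>e\<in>HH - B. pmf (weighted_choice A w) e *\<^sub>R pmf (gen_steps n P m (insert e B)) HH)"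
    by (rule sum_mono2[OF fA HA]) simp
  moreover have "(\<Sum>e\<in>HH - B. pmf (weighted_choice A w) e *\<^sub>R pmf (gen_steps n P m (insert e B)) HH)
       \<ge> (\<Sum>e\<in>HH - B. (a / W) * Q)"
  proof (rule sum_mono)
    fix e assume e: "e \<in> HH - B"
    have pe: "pmf (weighted_choice A w) e = a / W" using e HA wH pw by auto
    have aW: "a / W \<ge> 0" unfolding W_def using a0 sum_nonneg[of A w] wpos
      by (simp add: less_imp_le)
    show "a / W * Q \<le> pmf (weighted_choice A w) e *\<^sub>R pmf (gen_steps n P m (insert e B)) HH"
      unfolding real_scaleR_def pe by (rule mult_left_mono[OF IH[OF e] aW])
  qed
  ultimately have low: "real (Suc m) * (a / W) * Q \<le> pmf (gen_steps n P (Suc m) B) HH"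
    using cHB by simp
  have Aeq: "A = (HH - B) \<union> (A - HH)" using HA AB by auto
  have "W = sum w (HH - B) + sum w (A - HH)"
    unfolding W_def by (subst Aeq) (rule sum.union_disjoint, use fA finite_H in \<open>auto simp: HH_def\<close>)
  also have "sum w (HH - B) = real (Suc m) * a" using wH cHB by simp
  also have "sum w (A - HH) = real (card (A - HH)) * b" using wN by simp
  finally have Weq: "W = real (Suc m) * a + real (card (A - HH)) * b" .
  have cA: "card (A - HH) \<le> 4 * (Suc m)^2" using card_nonH[OF B] cHB unfolding A_def HH_def by simp
  have cA': "real (card (A - HH)) \<le> 4 * (real (Suc m))^2"
    using of_nat_mono[OF cA] by simp
  have Q0: "Q \<ge> 0" unfolding Q_def by simp
  have si: "Q * exp (- (4 * real (Suc m) / K)) \<le> real (Suc m) * (a / W) * Q"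
    using step_ineq[of "real n" "real (Suc m)" "real (card (A - HH))" Q, OF _ _ _ cA' Q0] n3
    unfolding Weq a_def b_def K_def by (simp add: mult.assoc)
  have ex: "exp (- (2 * real (Suc m) * (real (Suc m) + 1) / K)) = Q * exp (- (4 * real (Suc m) / K))"
  proof -
    have "2 * real (Suc m) * (real (Suc m) + 1) = 2 * real m * (real m + 1) + 4 * real (Suc m)"
      by (simp add: algebra_simps)
    hence E: "- (2 * real (Suc m) * (real (Suc m) + 1) / K) = - (2 * real m * (real m + 1) / K) + - (4 * real (Suc m) / K)"
      by (simp add: add_divide_distrib)
    show ?thesis unfolding Q_def E by (rule exp_add)
  qed
  show ?case using ex si low unfolding K_def P_def HH_def by linarith
qed

end

theorem claim5:
  shows "\<exists>c>0. \<exists>N. \<forall>n\<ge>N. \<forall>(d :: nat set \<Rightarrow> real) H.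
           (\<forall>e\<in>Kn_edges n. d e \<ge> 0) \<longrightarrow> ham_cycle n H \<longrightarrow>
           measure_pmf.prob (edge_gen n (PiH n H))
             {B. ham_cycle n B \<and> cost d B \<le> cost d H} \<ge> c"
proof (intro exI[of _ "exp (-4)"] conjI exI[of _ 7] allI impI)
  show "(0::real) < exp (- 4)" by simp
next
  fix n :: nat and d :: "nat set \<Rightarrow> real" and H
  assume n7: "7 \<le> n" and hH: "ham_cycle n H"
  then obtain g where g: "n \<ge> 3" "bij_betw g {0..<n} {0..<n}" "H = cycle_edges g n"
    unfolding ham_cycle_def by blast
  interpret hc n g using g by unfold_locales
  define rn where "rn = real n"
  have rn7: "rn \<ge> 7" unfolding rn_def using n7 by simp
  have K: "(rn - 1) * (rn - 2) > 0" using rn7 by simp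
  have h: "0 \<le> rn * (rn - 7)" using rn7 by simp
  have "2 * rn * (rn + 1) \<le> 4 * ((rn - 1) * (rn - 2))" using h by (simp add: algebra_simps)
  hence "2 * rn * (rn + 1) / ((rn - 1) * (rn - 2)) \<le> 4" using K by (simp add: divide_le_eq)
  hence "exp (- 4) \<le> exp (- (2 * real n * (real n + 1) / ((real n - 1) * (real n - 2))))"
    unfolding rn_def by simp
  also have "\<dots> \<le> pmf (edge_gen n (PiH n H)) H"
    unfolding edge_gen_def g(3) by (rule main) auto
  also have "\<dots> = measure_pmf.prob (edge_gen n (PiH n H)) {H}" by (simp add: measure_pmf_single)
  also have "\<dots> \<le> measure_pmf.prob (edge_gen n (PiH n H)) {B. ham_cycle n B \<and> cost d B \<le> cost d H}"
    using hH by (intro measure_pmf.finite_measure_mono) auto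
  finally show "exp (- 4) \<le> measure_pmf.prob (edge_gen n (PiH n H)) {B. ham_cycle n B \<and> cost d B \<le> cost d H}" .
qed

end
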